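(* Let $X=(X_t)_{t\in\mathbb N}$ be a time-homogeneous Markov chain on a finite state space $\mathcal S$ with column-stochastic transition matrix $M$, $M_{zx}=\mathbb P(X_{t+1}=z\mid X_t=x)$. Let $\{\mathcal S_1,\dots,\mathcal S_k\}$ be a partition of $\mathcal S$ and $\pi:\mathcal S\to\{\mathcal S_1,\dots,\mathcal S_k\}$ the map with $\pi(x)=\mathcal S_i$ iff $x\in\mathcal S_i$. Suppose that for every $i$, $$M_{zx}=M_{zx'}\quad\text{for all }x,x'\in\mathcal S_i\text{ and all }z\in\mathcal S\setminus\mathcal S_i.$$ Then $X$ is lumpable with respect to the partition, i.e. $\pi\circ X=(\pi(X_t))_t$ is a Markov chain for every initial distribution of $X_0$. *)

theory Defs
  imports "HOL-Probability.Probability" "HOL-Library.Disjoint_Sets"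
begin

context prob_space
begin

definition markov_property :: "(nat \<Rightarrow> 'a \<Rightarrow> 'b) \<Rightarrow> bool" where
  "markov_property Y \<longleftrightarrow>
    (\<forall>n (bs :: nat \<Rightarrow> 'b) c.
       prob {\<omega> \<in> space M. \<forall>t\<le>n. Y t \<omega> = bs t} > 0 \<longrightarrow>
         prob {\<omega> \<in> space M. Y (Suc n) \<omega> = c \<and> (\<forall>t\<le>n. Y t \<omega> = bs t)}
           / prob {\<omega> \<in> space M. \<forall>t\<le>n. Y t \<omega> = bs t}
         = prob {\<omega> \<in> space M. Y (Suc n) \<omega> = c \<and> Y n \<omega> = bs n}
           / prob {\<omega> \<in> space M. Y n \<omega> = bs n})"

definition homogeneous_markov_chain :: "(nat \<Rightarrow> 'a \<Rightarrow> 'b) \<Rightarrow> ('b \<Rightarrow> 'b \<Rightarrow> real) \<Rightarrow> bool" where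
  "homogeneous_markov_chain X T \<longleftrightarrow>
    markov_property X \<and>
    (\<forall>n x z. prob {\<omega> \<in> space M. X n \<omega> = x} > 0 \<longrightarrow>
       prob {\<omega> \<in> space M. X (Suc n) \<omega> = z \<and> X n \<omega> = x}
         / prob {\<omega> \<in> space M. X n \<omega> = x} = T z x)"

end

definition column_stochastic :: "('a::finite \<Rightarrow> 'a \<Rightarrow> real) \<Rightarrow> bool" where
  "column_stochastic T \<longleftrightarrow> (\<forall>z x. 0 \<le> T z x) \<and> (\<forall>x. (\<Sum>z\<in>UNIV. T z x) = 1)"

definition block_of :: "'a set set \<Rightarrow> 'a \<Rightarrow> 'a set" where
  "block_of P x = (THE B. B \<in> P \<and> x \<in> B)"

end

theory Submission imports Defs begin

context prob_space begin

lemma pred_in: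
  assumes meas: "\<And>t. X t \<in> measurable M (count_space UNIV)"
  shows "Measurable.pred M (\<lambda>\<omega>. X n \<omega> \<in> A)"
proof -
  have "X n -` A \<inter> space M \<in> sets M" using meas by (rule measurable_sets) simp
  thus ?thesis unfolding pred_def by (simp add: vimage_def Int_def conj_commute)
qed

lemma ev_meas:
  assumes meas: "\<And>t. X t \<in> measurable M (count_space UNIV)"
  shows "{\<omega> \<in> space M. X n \<omega> \<in> A \<and> (\<forall>t\<le>(m::nat). X t \<omega> = g t)} \<in> events"
proof -
  note meas[measurable] pred_in[OF meas, measurable]
  have "Measurable.pred M (\<lambda>\<omega>. X n \<omega> \<in> A \<and> (\<forall>t\<in>{..m}. X t \<omega> = g t))"
    by measurable
  thus ?thesis by (simp add: pred_def)
qed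

lemma ev_meas_eq:
  assumes meas: "\<And>t. X t \<in> measurable M (count_space UNIV)"
  shows "{\<omega> \<in> space M. X n \<omega> = z \<and> (\<forall>t\<le>(m::nat). X t \<omega> = g t)} \<in> events"
proof -
  note meas[measurable]
  have "Measurable.pred M (\<lambda>\<omega>. X n \<omega> = z \<and> (\<forall>t\<in>{..m}. X t \<omega> = g t))"
    by measurable
  thus ?thesis by (simp add: pred_def)
qed

lemma ev_meas_all:
  assumes meas: "\<And>t. X t \<in> measurable M (count_space UNIV)"
  shows "{\<omega> \<in> space M. (\<forall>t\<le>(m::nat). X t \<omega> = g t)} \<in> events"
proof -
  note meas[measurable]
  have "Measurable.pred M (\<lambda>\<omega>. (\<forall>t\<in>{..m}. X t \<omega> = g t))"
    by measurable
  thus ?thesis by (simp add: pred_def)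
qed

lemma ev_single:
  assumes meas: "\<And>t. X t \<in> measurable M (count_space UNIV)"
  shows "{\<omega> \<in> space M. X n \<omega> = z} \<in> events"
proof -
  note meas[measurable]
  have "Measurable.pred M (\<lambda>\<omega>. X n \<omega> = z)"
    by measurable
  thus ?thesis by (simp add: pred_def)
qed

lemma path_step:
  assumes meas: "\<And>t. X t \<in> measurable M (count_space UNIV)"
    and hmc: "homogeneous_markov_chain X T"
  shows "prob {\<omega> \<in> space M. X (Suc n) \<omega> = z \<and> (\<forall>t\<le>n. X t \<omega> = g t)}
       = T z (g n) * prob {\<omega> \<in> space M. \<forall>t\<le>n. X t \<omega> = g t}"
proof (cases "prob {\<omega> \<in> space M. \<forall>t\<le>n. X t \<omega> = g t} > 0")
  case True
  have mp: "markov_property X" using hmc unfolding homogeneous_markov_chain_def by simp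
  have A: "{\<omega> \<in> space M. \<forall>t\<le>n. X t \<omega> = g t} \<in> events"
    by (rule ev_meas_all[OF meas])
  have B: "{\<omega> \<in> space M. X n \<omega> = g n} \<in> events"
    by (rule ev_single[OF meas])
  have "prob {\<omega> \<in> space M. \<forall>t\<le>n. X t \<omega> = g t} \<le> prob {\<omega> \<in> space M. X n \<omega> = g n}"
    by (rule finite_measure_mono[OF _ B]) auto
  with True have pos: "prob {\<omega> \<in> space M. X n \<omega> = g n} > 0" by simp
  have "prob {\<omega> \<in> space M. X (Suc n) \<omega> = z \<and> (\<forall>t\<le>n. X t \<omega> = g t)}
         / prob {\<omega> \<in> space M. \<forall>t\<le>n. X t \<omega> = g t}
       = prob {\<omega> \<in> space M. X (Suc n) \<omega> = z \<and> X n \<omega> = g n}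
           / prob {\<omega> \<in> space M. X n \<omega> = g n}"
    by (rule mp[unfolded markov_property_def, rule_format, of n g z, OF True])
  also have "\<dots> = T z (g n)"
    by (rule hmc[unfolded homogeneous_markov_chain_def, THEN conjunct2, rule_format, of n "g n" z, OF pos])
  finally show ?thesis using True by (simp add: field_simps)
next
  case False
  hence z: "prob {\<omega> \<in> space M. \<forall>t\<le>n. X t \<omega> = g t} = 0"
    using measure_nonneg[of M "{\<omega> \<in> space M. \<forall>t\<le>n. X t \<omega> = g t}"] by linarith
  have A: "{\<omega> \<in> space M. \<forall>t\<le>n. X t \<omega> = g t} \<in> events"
    by (rule ev_meas_all[OF meas])
  have "prob {\<omega> \<in> space M. X (Suc n) \<omega> = z \<and> (\<forall>t\<le>n. X t \<omega> = g t)}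
        \<le> prob {\<omega> \<in> space M. \<forall>t\<le>n. X t \<omega> = g t}"
    by (rule finite_measure_mono[OF _ A]) auto
  hence "prob {\<omega> \<in> space M. X (Suc n) \<omega> = z \<and> (\<forall>t\<le>n. X t \<omega> = g t)} = 0"
    using z measure_nonneg[of M "{\<omega> \<in> space M. X (Suc n) \<omega> = z \<and> (\<forall>t\<le>n. X t \<omega> = g t)}"] by linarith
  thus ?thesis using z by simp
qed

lemma path_set:
  fixes X :: "nat \<Rightarrow> 'a \<Rightarrow> 'c::finite"
  assumes meas: "\<And>t. X t \<in> measurable M (count_space UNIV)"
    and hmc: "homogeneous_markov_chain X T"
  shows "prob {\<omega> \<in> space M. X (Suc n) \<omega> \<in> C \<and> (\<forall>t\<le>n. X t \<omega> = g t)}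
       = (\<Sum>z\<in>C. T z (g n)) * prob {\<omega> \<in> space M. \<forall>t\<le>n. X t \<omega> = g t}"
proof -
  have fin: "finite C" by simp
  have eq: "{\<omega> \<in> space M. X (Suc n) \<omega> \<in> C \<and> (\<forall>t\<le>n. X t \<omega> = g t)}
     = (\<Union>z\<in>C. {\<omega> \<in> space M. X (Suc n) \<omega> = z \<and> (\<forall>t\<le>n. X t \<omega> = g t)})" by auto
  have "prob (\<Union>z\<in>C. {\<omega> \<in> space M. X (Suc n) \<omega> = z \<and> (\<forall>t\<le>n. X t \<omega> = g t)})
      = (\<Sum>z\<in>C. prob {\<omega> \<in> space M. X (Suc n) \<omega> = z \<and> (\<forall>t\<le>n. X t \<omega> = g t)})"
  proof (rule finite_measure_finite_Union[OF fin])
    show "(\<lambda>z. {\<omega> \<in> space M. X (Suc n) \<omega> = z \<and> (\<forall>t\<le>n. X t \<omega> = g t)}) ` C \<subseteq> events"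
      using ev_meas_eq[OF meas] by auto
    show "disjoint_family_on (\<lambda>z. {\<omega> \<in> space M. X (Suc n) \<omega> = z \<and> (\<forall>t\<le>n. X t \<omega> = g t)}) C"
      by (auto simp: disjoint_family_on_def)
  qed
  also have "\<dots> = (\<Sum>z\<in>C. T z (g n) * prob {\<omega> \<in> space M. \<forall>t\<le>n. X t \<omega> = g t})"
    using path_step[OF meas hmc] by simp
  finally show ?thesis using eq by (simp add: sum_distrib_right)
qed

lemma union_paths:
  fixes X :: "nat \<Rightarrow> 'a \<Rightarrow> 'c::finite"
  assumes meas: "\<And>t. X t \<in> measurable M (count_space UNIV)"
    and G: "G \<subseteq> (\<Pi>\<^sub>E t\<in>{..n}. (UNIV :: 'c set))"
  shows "prob (\<Union>g\<in>G. {\<omega> \<in> space M. X m \<omega> \<in> C \<and> (\<forall>t\<le>n. X t \<omega> = g t)})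
    = (\<Sum>g\<in>G. prob {\<omega> \<in> space M. X m \<omega> \<in> C \<and> (\<forall>t\<le>n. X t \<omega> = g t)})"
proof (rule finite_measure_finite_Union)
  show "finite G" using G by (rule finite_subset) (intro finite_PiE; auto)
  show "(\<lambda>g. {\<omega> \<in> space M. X m \<omega> \<in> C \<and> (\<forall>t\<le>n. X t \<omega> = g t)}) ` G \<subseteq> events"
    using ev_meas[OF meas] by auto
  show "disjoint_family_on (\<lambda>g. {\<omega> \<in> space M. X m \<omega> \<in> C \<and> (\<forall>t\<le>n. X t \<omega> = g t)}) G"
  unfolding disjoint_family_on_def
  proof (intro ballI impI)
    fix g g' assume gg: "g \<in> G" "g' \<in> G" "g \<noteq> g'"
    show "{\<omega> \<in> space M. X m \<omega> \<in> C \<and> (\<forall>t\<le>n. X t \<omega> = g t)} \<inter>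
          {\<omega> \<in> space M. X m \<omega> \<in> C \<and> (\<forall>t\<le>n. X t \<omega> = g' t)} = {}"
    proof (rule ccontr)
      assume "\<not> ?thesis"
      then obtain \<omega> where "\<forall>t\<le>n. X t \<omega> = g t" "\<forall>t\<le>n. X t \<omega> = g' t" by blast
      hence h: "\<forall>t\<in>{..n}. g t = g' t" by auto
      have e: "g \<in> extensional {..n}" "g' \<in> extensional {..n}" using gg G by (auto simp: PiE_def)
      have "g = g'" by (rule extensionalityI[OF e]) (use h in auto)
      thus False using gg by simp
    qed
  qed
qed

lemma lumped:
  fixes X :: "nat \<Rightarrow> 'a \<Rightarrow> 'c::finite"
  assumes meas: "\<And>t. X t \<in> measurable M (count_space UNIV)"
    and hmc: "homogeneous_markov_chain X T"
    and G: "G \<subseteq> (\<Pi>\<^sub>E t\<in>{..n}. (UNIV :: 'c set))"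
    and GB: "\<And>g. g \<in> G \<Longrightarrow> g n \<in> B"
    and q: "\<And>x. x \<in> B \<Longrightarrow> (\<Sum>z\<in>C. T z x) = q"
  shows "prob (\<Union>g\<in>G. {\<omega> \<in> space M. X (Suc n) \<omega> \<in> C \<and> (\<forall>t\<le>n. X t \<omega> = g t)})
    = q * prob (\<Union>g\<in>G. {\<omega> \<in> space M. X 0 \<omega> \<in> UNIV \<and> (\<forall>t\<le>n. X t \<omega> = g t)})"
proof -
  have "prob (\<Union>g\<in>G. {\<omega> \<in> space M. X (Suc n) \<omega> \<in> C \<and> (\<forall>t\<le>n. X t \<omega> = g t)})
    = (\<Sum>g\<in>G. prob {\<omega> \<in> space M. X (Suc n) \<omega> \<in> C \<and> (\<forall>t\<le>n. X t \<omega> = g t)})"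
    by (rule union_paths[OF meas G])
  also have "\<dots> = (\<Sum>g\<in>G. q * prob {\<omega> \<in> space M. X 0 \<omega> \<in> UNIV \<and> (\<forall>t\<le>n. X t \<omega> = g t)})"
    by (rule sum.cong) (simp_all add: path_set[OF meas hmc] q GB)
  also have "\<dots> = q * prob (\<Union>g\<in>G. {\<omega> \<in> space M. X 0 \<omega> \<in> UNIV \<and> (\<forall>t\<le>n. X t \<omega> = g t)})"
    using union_paths[of X G n 0 UNIV, OF meas G] by (simp add: sum_distrib_left)
  finally show ?thesis .
qed

end

lemma block_of_eq:
  assumes "partition_on UNIV P" "B \<in> P" "x \<in> B"
  shows "block_of P x = B"
  unfolding block_of_def
proof (rule the_equality)
  show "B \<in> P \<and> x \<in> B" using assms by simp
  fix B' assume "B' \<in> P \<and> x \<in> B'"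
  thus "B' = B" using assms unfolding partition_on_def disjoint_def by blast
qed

lemma block_of_mem:
  assumes "partition_on UNIV P"
  shows "block_of P x \<in> P \<and> x \<in> block_of P x"
proof -
  obtain B where "B \<in> P" "x \<in> B" using assms unfolding partition_on_def by blast
  thus ?thesis using block_of_eq[OF assms] by simp
qed


theorem mainTheorem12:
  fixes \<Omega> :: "'w measure" and X :: "nat \<Rightarrow> 'w \<Rightarrow> 'a::finite"
    and T :: "'a \<Rightarrow> 'a \<Rightarrow> real" and P :: "'a set set"
  assumes "prob_space \<Omega>"
    and "\<And>t. X t \<in> measurable \<Omega> (count_space UNIV)"
    and "column_stochastic T"
    and "prob_space.homogeneous_markov_chain \<Omega> X T"
    and "partition_on UNIV P"
    and "\<And>B x x' z. B \<in> P \<Longrightarrow> x \<in> B \<Longrightarrow> x' \<in> B \<Longrightarrow> z \<notin> B \<Longrightarrow> T z x = T z x'"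
  shows "prob_space.markov_property \<Omega> (\<lambda>t \<omega>. block_of P (X t \<omega>))"
proof -
  interpret prob_space \<Omega> by fact
  note meas = assms(2)
  note hmc = assms(4)
  note part = assms(5)
  have cs: "\<And>x. (\<Sum>z\<in>UNIV. T z x) = 1" using assms(3) unfolding column_stochastic_def by simp
  show ?thesis
    unfolding markov_property_def
  proof (intro allI impI)
    fix n bs c
    assume pos: "0 < prob {\<omega> \<in> space \<Omega>. \<forall>t\<le>n. block_of P (X t \<omega>) = bs t}"
    define B where "B = bs n"
    define C where "C = {z. block_of P z = c}"
    let ?PI = "\<Pi>\<^sub>E t\<in>{..n}. (UNIV :: 'a set)"
    define G1 where "G1 = {g \<in> ?PI. \<forall>t\<le>n. block_of P (g t) = bs t}"
    define G2 where "G2 = {g \<in> ?PI. block_of P (g n) = bs n}"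
    obtain \<omega>0 where w0: "\<omega>0 \<in> space \<Omega>" "\<forall>t\<le>n. block_of P (X t \<omega>0) = bs t"
    proof -
      have "{\<omega> \<in> space \<Omega>. \<forall>t\<le>n. block_of P (X t \<omega>) = bs t} \<noteq> {}"
      proof
        assume h: "{\<omega> \<in> space \<Omega>. \<forall>t\<le>n. block_of P (X t \<omega>) = bs t} = {}"
        have "prob {\<omega> \<in> space \<Omega>. \<forall>t\<le>n. block_of P (X t \<omega>) = bs t} = 0"
          unfolding h by simp
        with pos show False by simp
      qed
      thus ?thesis using that by blast
    qed
    define x0 where "x0 = X n \<omega>0"
    have B: "B \<in> P" "x0 \<in> B" using block_of_mem[OF part, of x0] w0 by (auto simp: B_def x0_def)
    have inB: "block_of P y = B \<longleftrightarrow> y \<in> B" for y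
    proof
      assume "block_of P y = B"
      thus "y \<in> B" using block_of_mem[OF part, of y] by simp
    next
      assume "y \<in> B"
      thus "block_of P y = B" by (rule block_of_eq[OF part B(1)])
    qed
    define q where "q = (\<Sum>z\<in>C. T z x0)"
    have q: "\<And>x. x \<in> B \<Longrightarrow> (\<Sum>z\<in>C. T z x) = q"
    proof -
      fix x assume x: "x \<in> B"
      have out: "\<And>z. z \<notin> B \<Longrightarrow> T z x = T z x0" using assms(6)[OF B(1) x B(2)] by blast
      show "(\<Sum>z\<in>C. T z x) = q"
      proof (cases "c = B")
        case True
        hence CB: "C = B" unfolding C_def using inB by blast
        have split: "\<And>y. (\<Sum>z\<in>UNIV. T z y) = (\<Sum>z\<in>UNIV - B. T z y) + (\<Sum>z\<in>B. T z y)"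
          by (rule sum.subset_diff) auto
        have "(\<Sum>z\<in>UNIV - B. T z x) = (\<Sum>z\<in>UNIV - B. T z x0)"
          by (rule sum.cong) (auto intro: out)
        thus ?thesis using split[of x] split[of x0] cs[of x] cs[of x0]
          by (simp add: q_def CB)
      next
        case False
        hence "\<And>z. z \<in> C \<Longrightarrow> z \<notin> B" unfolding C_def using inB by blast
        thus ?thesis unfolding q_def by (intro sum.cong) (auto intro: out)
      qed
    qed
    have G1a: "G1 \<subseteq> ?PI" unfolding G1_def by blast
    have G1b: "g n \<in> B" if "g \<in> G1" for g
      using that inB[of "g n"] unfolding G1_def B_def by blast
    have G2a: "G2 \<subseteq> ?PI" unfolding G2_def by blast
    have G2b: "g n \<in> B" if "g \<in> G2" for g
      using that inB[of "g n"] unfolding G2_def B_def by blast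
    note G1 = G1a G1b
    note G2 = G2a G2b
    have E1: "{\<omega> \<in> space \<Omega>. block_of P (X (Suc n) \<omega>) = c \<and> (\<forall>t\<le>n. block_of P (X t \<omega>) = bs t)}
      = (\<Union>g\<in>G1. {\<omega> \<in> space \<Omega>. X (Suc n) \<omega> \<in> C \<and> (\<forall>t\<le>n. X t \<omega> = g t)})"
    proof (intro equalityI subsetI)
      fix \<omega> assume "\<omega> \<in> {\<omega> \<in> space \<Omega>. block_of P (X (Suc n) \<omega>) = c \<and> (\<forall>t\<le>n. block_of P (X t \<omega>) = bs t)}"
      hence "restrict (\<lambda>t. X t \<omega>) {..n} \<in> G1" "\<omega> \<in> {\<omega> \<in> space \<Omega>. X (Suc n) \<omega> \<in> C \<and> (\<forall>t\<le>n. X t \<omega> = restrict (\<lambda>t. X t \<omega>) {..n} t)}"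
        unfolding G1_def C_def by auto
      thus "\<omega> \<in> (\<Union>g\<in>G1. {\<omega> \<in> space \<Omega>. X (Suc n) \<omega> \<in> C \<and> (\<forall>t\<le>n. X t \<omega> = g t)})"
        by blast
    qed (auto simp: G1_def C_def)
    have F1: "{\<omega> \<in> space \<Omega>. \<forall>t\<le>n. block_of P (X t \<omega>) = bs t}
      = (\<Union>g\<in>G1. {\<omega> \<in> space \<Omega>. X 0 \<omega> \<in> UNIV \<and> (\<forall>t\<le>n. X t \<omega> = g t)})"
    proof (intro equalityI subsetI)
      fix \<omega> assume "\<omega> \<in> {\<omega> \<in> space \<Omega>. \<forall>t\<le>n. block_of P (X t \<omega>) = bs t}"
      hence "restrict (\<lambda>t. X t \<omega>) {..n} \<in> G1" "\<omega> \<in> {\<omega> \<in> space \<Omega>. X 0 \<omega> \<in> UNIV \<and> (\<forall>t\<le>n. X t \<omega> = restrict (\<lambda>t. X t \<omega>) {..n} t)}"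
        unfolding G1_def by auto
      thus "\<omega> \<in> (\<Union>g\<in>G1. {\<omega> \<in> space \<Omega>. X 0 \<omega> \<in> UNIV \<and> (\<forall>t\<le>n. X t \<omega> = g t)})"
        by blast
    qed (auto simp: G1_def)
    have E2: "{\<omega> \<in> space \<Omega>. block_of P (X (Suc n) \<omega>) = c \<and> block_of P (X n \<omega>) = bs n}
      = (\<Union>g\<in>G2. {\<omega> \<in> space \<Omega>. X (Suc n) \<omega> \<in> C \<and> (\<forall>t\<le>n. X t \<omega> = g t)})"
    proof (intro equalityI subsetI)
      fix \<omega> assume "\<omega> \<in> {\<omega> \<in> space \<Omega>. block_of P (X (Suc n) \<omega>) = c \<and> block_of P (X n \<omega>) = bs n}"
      hence "restrict (\<lambda>t. X t \<omega>) {..n} \<in> G2" "\<omega> \<in> {\<omega> \<in> space \<Omega>. X (Suc n) \<omega> \<in> C \<and> (\<forall>t\<le>n. X t \<omega> = restrict (\<lambda>t. X t \<omega>) {..n} t)}"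
        unfolding G2_def C_def by auto
      thus "\<omega> \<in> (\<Union>g\<in>G2. {\<omega> \<in> space \<Omega>. X (Suc n) \<omega> \<in> C \<and> (\<forall>t\<le>n. X t \<omega> = g t)})"
        by blast
    qed (auto simp: G2_def C_def)
    have F2: "{\<omega> \<in> space \<Omega>. block_of P (X n \<omega>) = bs n}
      = (\<Union>g\<in>G2. {\<omega> \<in> space \<Omega>. X 0 \<omega> \<in> UNIV \<and> (\<forall>t\<le>n. X t \<omega> = g t)})"
    proof (intro equalityI subsetI)
      fix \<omega> assume "\<omega> \<in> {\<omega> \<in> space \<Omega>. block_of P (X n \<omega>) = bs n}"
      hence "restrict (\<lambda>t. X t \<omega>) {..n} \<in> G2" "\<omega> \<in> {\<omega> \<in> space \<Omega>. X 0 \<omega> \<in> UNIV \<and> (\<forall>t\<le>n. X t \<omega> = restrict (\<lambda>t. X t \<omega>) {..n} t)}"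
        unfolding G2_def by auto
      thus "\<omega> \<in> (\<Union>g\<in>G2. {\<omega> \<in> space \<Omega>. X 0 \<omega> \<in> UNIV \<and> (\<forall>t\<le>n. X t \<omega> = g t)})"
        by blast
    qed (auto simp: G2_def)
    have F2ev: "{\<omega> \<in> space \<Omega>. block_of P (X n \<omega>) = bs n} \<in> events"
      using pred_in[of X n "{y. block_of P y = bs n}", OF meas] unfolding pred_def by simp
    have "prob {\<omega> \<in> space \<Omega>. \<forall>t\<le>n. block_of P (X t \<omega>) = bs t}
       \<le> prob {\<omega> \<in> space \<Omega>. block_of P (X n \<omega>) = bs n}"
      by (rule finite_measure_mono[OF _ F2ev]) auto
    with pos have pos2: "0 < prob {\<omega> \<in> space \<Omega>. block_of P (X n \<omega>) = bs n}" by simp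
    have l1: "prob {\<omega> \<in> space \<Omega>. block_of P (X (Suc n) \<omega>) = c \<and> (\<forall>t\<le>n. block_of P (X t \<omega>) = bs t)}
       = q * prob {\<omega> \<in> space \<Omega>. \<forall>t\<le>n. block_of P (X t \<omega>) = bs t}"
      unfolding E1 F1 by (rule lumped[where G=G1 and B=B and q=q and T=T]) (simp_all add: meas hmc G1 q)
    have l2: "prob {\<omega> \<in> space \<Omega>. block_of P (X (Suc n) \<omega>) = c \<and> block_of P (X n \<omega>) = bs n}
       = q * prob {\<omega> \<in> space \<Omega>. block_of P (X n \<omega>) = bs n}"
      unfolding E2 F2 by (rule lumped[where G=G2 and B=B and q=q and T=T]) (simp_all add: meas hmc G2 q)
    show "prob {\<omega> \<in> space \<Omega>. block_of P (X (Suc n) \<omega>) = c \<and> (\<forall>t\<le>n. block_of P (X t \<omega>) = bs t)} /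
          prob {\<omega> \<in> space \<Omega>. \<forall>t\<le>n. block_of P (X t \<omega>) = bs t} =
          prob {\<omega> \<in> space \<Omega>. block_of P (X (Suc n) \<omega>) = c \<and> block_of P (X n \<omega>) = bs n} /
          prob {\<omega> \<in> space \<Omega>. block_of P (X n \<omega>) = bs n}"
      using pos pos2 l1 l2 by simp
  qed
qed

end
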